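(* For $i\in\{1,\dots,N\}$ and $m\geq 0$ let $a^{(m)}_i\in\mathbb{C}$ be the scalar with $C^{(2m+1)}_{ii}\cdot v=a^{(m)}_i v$ (such scalars exist, since $C^{(2m+1)}_{ii}\cdot v$ is a scalar multiple of $v$). Then, as formal Laurent series in $u^{-1}$, $$\sum_{m=0}^\infty a^{(m)}_i\,u^{-2m-1}=\frac{u\,\lambda_i}{u^2-\lambda_i(\lambda_i-1)}\prod_{j=i+1}^{N}\frac{u^2-\lambda_j(\lambda_j+1)}{u^2-\lambda_j(\lambda_j-1)},$$ where each factor $(u^2-c)^{-1}$ is expanded as $\sum_{k\ge0}c^k u^{-2k-2}$.
   Context: Let $N\geq1$, $I=\{-N,\dots,-1,1,\dots,N\}$, and for $k\in I$ put $\bar k=0$ if $k>0$, $\bar k=1$ if $k<0$. The Lie superalgebra $\mathfrak{q}(N)$ over $\mathbb{C}$ is spanned by elements $F_{ij}$ ($i,j\in I$) with $F_{-i,-j}=F_{ij}$ (realized as $F_{ij}=E_{ij}+E_{-i,-j}\in\mathfrak{gl}(N|N)$), $F_{ij}$ of parity $\bar\imath+\bar\jmath\bmod 2$, and supercommutator $$[F_{ij}, F_{kl}] = \delta_{kj} F_{il} - (-1)^{(\bar{\imath}+ \bar{\jmath})(\bar{k} + \bar{l})} \delta_{il} F_{kj} + \delta_{k,-j} F_{-i,l} - (-1)^{(\bar{\imath} + \bar{\jmath})(\bar{k} + \bar{l})} \delta_{-i,l} F_{k,-j}.$$ For $n\geq1$ define $C^{(n)}_{ij}\in U(\mathfrak{q}(N))$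 by $$C^{(n)}_{ij} = \sum_{k_1,\ldots,k_{n-1}\in I}F_{ik_1} (-1)^{\bar{k}_1} F_{k_1k_2} (-1)^{\bar{k}_2} \cdots F_{k_{n-2}k_{n-1}} (-1)^{\bar{k}_{n-1}} F_{k_{n-1}j}$$ (so $C^{(1)}_{ij}=F_{ij}$). Let $V$ be a representation of $\mathfrak{q}(N)$ and $v\in V$ a vector such that $F_{ij}\cdot v=0$ whenever $|i|<|j|$, and $F_{ii}\cdot v=\lambda_i v$ for $i=1,\dots,N$, where $\lambda_1,\dots,\lambda_N\in\mathbb{C}$. *)

theory Defs
  imports Main "HOL-Computational_Algebra.Formal_Laurent_Series"
begin

definition qI :: "nat \<Rightarrow> int set" where
  "qI N = {- int N .. int N} - {0}"

definition qpar :: "int \<Rightarrow> nat" where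
  "qpar k = (if k < 0 then 1 else 0)"

definition qsgn :: "int \<Rightarrow> int \<Rightarrow> int \<Rightarrow> int \<Rightarrow> complex" where
  "qsgn i j k l = (-1) ^ ((qpar i + qpar j) * (qpar k + qpar l))"

text \<open>A representation of q(N) (i.e. a module over U(q(N))) on a complex vector
  space with scalar multiplication sc: F i j is the operator by which F_ij acts.\<close>
definition qN_rep :: "nat \<Rightarrow> (complex \<Rightarrow> 'v::ab_group_add \<Rightarrow> 'v) \<Rightarrow> (int \<Rightarrow> int \<Rightarrow> 'v \<Rightarrow> 'v) \<Rightarrow> bool" where
  "qN_rep N sc F \<longleftrightarrow>
     vector_space sc \<and>
     (\<forall>i\<in>qI N. \<forall>j\<in>qI N. Vector_Spaces.linear sc sc (F i j)) \<and>
     (\<forall>i\<in>qI N. \<forall>j\<in>qI N. F (-i) (-j) = F i j) \<and>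
     (\<forall>i\<in>qI N. \<forall>j\<in>qI N. \<forall>k\<in>qI N. \<forall>l\<in>qI N. \<forall>w.
        F i j (F k l w) - sc (qsgn i j k l) (F k l (F i j w)) =
          (if k = j then F i l w else 0)
          - sc (qsgn i j k l) (if i = l then F k j w else 0)
          + (if k = - j then F (- i) l w else 0)
          - sc (qsgn i j k l) (if - i = l then F k (- j) w else 0))"

text \<open>Action of C^{(n)}_ij on a vector w (n \<ge> 1; the value for n = 0 is irrelevant):
  C^{(n+1)}_ij w = sum over k in I of F_ik ((-1)^(bar k) C^{(n)}_kj w).\<close>
fun qC :: "nat \<Rightarrow> (complex \<Rightarrow> 'v::ab_group_add \<Rightarrow> 'v) \<Rightarrow> (int \<Rightarrow> int \<Rightarrow> 'v \<Rightarrow> 'v)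
            \<Rightarrow> nat \<Rightarrow> int \<Rightarrow> int \<Rightarrow> 'v \<Rightarrow> 'v" where
  "qC N sc F 0 i j w = w"
| "qC N sc F (Suc 0) i j w = F i j w"
| "qC N sc F (Suc (Suc n)) i j w =
     (\<Sum>k\<in>qI N. F i k (sc ((-1) ^ qpar k) (qC N sc F (Suc n) k j w)))"

end

theory Submission
  imports Defs
begin


lemma qsgn_mult: "qsgn a b c k * qsgn a b k d = qsgn a b c d"
  unfolding qsgn_def qpar_def by (auto simp: power_add[symmetric] algebra_simps power_mult_distrib)

lemma qsgn_sq: "qsgn a b c d * qsgn a b c d = 1"
  unfolding qsgn_def qpar_def by (auto simp: power_add[symmetric])

lemma qsgn_cancel: "a \<noteq> 0 \<Longrightarrow> b \<noteq> 0 \<Longrightarrow> qsgn a b c b * (-1)^qpar b = qsgn a b c a * (-1)^qpar a"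
  unfolding qsgn_def qpar_def by auto

lemma qsgn_cancel2: "a \<noteq> 0 \<Longrightarrow> b \<noteq> 0 \<Longrightarrow> qsgn a b c (-b) * (-1)^qpar (-b) = qsgn a b c (-a) * (-1)^qpar (-a)"
  unfolding qsgn_def qpar_def by auto


locale qrep = vector_space sc for sc :: "complex \<Rightarrow> 'v::ab_group_add \<Rightarrow> 'v" +
  fixes N :: nat and F :: "int \<Rightarrow> int \<Rightarrow> 'v \<Rightarrow> 'v"
  assumes lin: "\<And>i j. i\<in>qI N \<Longrightarrow> j\<in>qI N \<Longrightarrow> Vector_Spaces.linear sc sc (F i j)"
  and symF: "\<And>i j. i\<in>qI N \<Longrightarrow> j\<in>qI N \<Longrightarrow> F (-i) (-j) = F i j"
  and rel: "\<And>i j k l w. i\<in>qI N \<Longrightarrow> j\<in>qI N \<Longrightarrow> k\<in>qI N \<Longrightarrow> l\<in>qI N \<Longrightarrow>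
        F i j (F k l w) - sc (qsgn i j k l) (F k l (F i j w)) =
          (if k = j then F i l w else 0)
          - sc (qsgn i j k l) (if i = l then F k j w else 0)
          + (if k = - j then F (- i) l w else 0)
          - sc (qsgn i j k l) (if - i = l then F k (- j) w else 0)"
begin

abbreviation C where "C \<equiv> qC N sc F"
abbreviation J :: "int \<Rightarrow> complex" where "J k \<equiv> (-1)^qpar k"

lemma qI_neg[simp]: "- a \<in> qI N \<longleftrightarrow> a \<in> qI N"
  unfolding qI_def by auto
lemma qI_nz: "a \<in> qI N \<Longrightarrow> a \<noteq> 0" unfolding qI_def by auto
lemma fin_qI[simp]: "finite (qI N)" unfolding qI_def by auto

lemma F_hom: "i\<in>qI N \<Longrightarrow> j\<in>qI N \<Longrightarrow> module_hom sc sc (F i j)"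
  using lin by (simp add: module_hom_iff_linear)

lemma F_add: "i\<in>qI N \<Longrightarrow> j\<in>qI N \<Longrightarrow> F i j (x + y) = F i j x + F i j y"
  using F_hom module_hom.add by blast
lemma F_scale: "i\<in>qI N \<Longrightarrow> j\<in>qI N \<Longrightarrow> F i j (sc r x) = sc r (F i j x)"
  using F_hom module_hom.scale by blast
lemma F_diff: "i\<in>qI N \<Longrightarrow> j\<in>qI N \<Longrightarrow> F i j (x - y) = F i j x - F i j y"
  using F_hom module_hom.diff by blast
lemma F_sum: "i\<in>qI N \<Longrightarrow> j\<in>qI N \<Longrightarrow> F i j (sum g A) = (\<Sum>a\<in>A. F i j (g a))"
  using F_hom module_hom.sum by blast
lemma F_zero: "i\<in>qI N \<Longrightarrow> j\<in>qI N \<Longrightarrow> F i j 0 = 0"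
  using F_hom module_hom.zero by blast

lemma C_SS: "C (Suc (Suc n)) c d w = (\<Sum>k\<in>qI N. F c k (sc (J k) (C (Suc n) k d w)))"
  by simp

lemma C_Suc: "n \<ge> 1 \<Longrightarrow> C (Suc n) c d w = (\<Sum>k\<in>qI N. F c k (sc (J k) (C n k d w)))"
  by (cases n) auto

lemma C_hom: "c\<in>qI N \<Longrightarrow> d\<in>qI N \<Longrightarrow> module_hom sc sc (C n c d)"
proof (induction n arbitrary: c)
  case 0
  then show ?case by (simp add: module_hom_iff vector_space_axioms module_axioms)
next
  case (Suc n)
  show ?case
  proof (cases n)
    case 0
    then show ?thesis using F_hom Suc by simp
  next
    case (Suc m)
    have h: "\<And>k. k \<in> qI N \<Longrightarrow> module_hom sc sc (C n k d)" using Suc.IH Suc.prems by auto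
    show ?thesis unfolding module_hom_iff
    proof (intro conjI allI)
      show "module sc" by (rule module_axioms)
      show "module sc" by (rule module_axioms)
      fix x y
      show "C (Suc n) c d (x + y) = C (Suc n) c d x + C (Suc n) c d y"
      proof -
        have "\<And>k. k\<in>qI N \<Longrightarrow> F c k (sc (J k) (C n k d (x+y))) = F c k (sc (J k) (C n k d x)) + F c k (sc (J k) (C n k d y))"
        proof -
          fix k assume k: "k \<in> qI N"
          have "C n k d (x+y) = C n k d x + C n k d y" using h[OF k] module_hom.add by blast
          then show "F c k (sc (J k) (C n k d (x+y))) = F c k (sc (J k) (C n k d x)) + F c k (sc (J k) (C n k d y))"
            using k Suc.prems by (simp add: F_add scale_right_distrib)
        qed
        then show ?thesis using Suc by (simp add: sum.distrib[symmetric])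
      qed
    next
      fix r x
      show "C (Suc n) c d (sc r x) = sc r (C (Suc n) c d x)"
      proof -
        have "\<And>k. k\<in>qI N \<Longrightarrow> F c k (sc (J k) (C n k d (sc r x))) = sc r (F c k (sc (J k) (C n k d x)))"
        proof -
          fix k assume k: "k \<in> qI N"
          have "C n k d (sc r x) = sc r (C n k d x)" using h[OF k] module_hom.scale by blast
          then show "F c k (sc (J k) (C n k d (sc r x))) = sc r (F c k (sc (J k) (C n k d x)))"
            using k Suc.prems by (simp add: F_scale mult.commute)
        qed
        then show ?thesis using Suc by (simp add: scale_sum_right)
      qed
    qed
  qed
qed

lemma C_add: "c\<in>qI N \<Longrightarrow> d\<in>qI N \<Longrightarrow> C n c d (x + y) = C n c d x + C n c d y"
  using C_hom module_hom.add by blast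
lemma C_scale: "c\<in>qI N \<Longrightarrow> d\<in>qI N \<Longrightarrow> C n c d (sc r x) = sc r (C n c d x)"
  using C_hom module_hom.scale by blast
lemma C_diff: "c\<in>qI N \<Longrightarrow> d\<in>qI N \<Longrightarrow> C n c d (x - y) = C n c d x - C n c d y"
  using C_hom module_hom.diff by blast
lemma C_sum: "c\<in>qI N \<Longrightarrow> d\<in>qI N \<Longrightarrow> C n c d (sum g A) = (\<Sum>a\<in>A. C n c d (g a))"
  using C_hom module_hom.sum by blast
lemma C_zero: "c\<in>qI N \<Longrightarrow> d\<in>qI N \<Longrightarrow> C n c d 0 = 0"
  using C_hom module_hom.zero by blast

end


lemma sum_if_const: "(\<Sum>k\<in>S. if P then f k else 0) = (if P then sum f S else (0::'a::comm_monoid_add))"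
  by simp

context qrep begin

lemma sc_if: "sc r (if P then x else 0) = (if P then sc r x else 0)" by simp
lemma F_if: "i\<in>qI N \<Longrightarrow> j\<in>qI N \<Longrightarrow> F i j (if P then x else 0) = (if P then F i j x else 0)"
  by (simp add: F_zero)

lemma comm:
  assumes n: "n \<ge> 1" and a: "a\<in>qI N" and b: "b\<in>qI N" and c: "c\<in>qI N" and d: "d\<in>qI N"
  shows "F a b (C n c d w) - sc (qsgn a b c d) (C n c d (F a b w)) =
          (if c = b then C n a d w else 0)
          - sc (qsgn a b c d) (if a = d then C n c b w else 0)
          + (if c = - b then C n (- a) d w else 0)
          - sc (qsgn a b c d) (if - a = d then C n c (- b) w else 0)"
  using n c
proof (induction n arbitrary: c rule: dec_induct)
  case base
  then show ?case using rel[OF a b _ d] by simp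
next
  case (step n c)
  note IH = step.IH
  let ?s = "qsgn a b c d"
  define X where "X k = C n k d w" for k
  define Y where "Y k = C n k d (F a b w)" for k
  define relR where "relR k = (if c = b then F a k (sc (J k) (X k)) else 0)
       - sc (qsgn a b c k) (if a = k then F c b (sc (J k) (X k)) else 0)
       + (if c = - b then F (-a) k (sc (J k) (X k)) else 0)
       - sc (qsgn a b c k) (if - a = k then F c (-b) (sc (J k) (X k)) else 0)" for k
  define R2 where "R2 k = (if k = b then C n a d w else 0)
       - sc (qsgn a b k d) (if a = d then C n k b w else 0)
       + (if k = - b then C n (- a) d w else 0)
       - sc (qsgn a b k d) (if - a = d then C n k (- b) w else 0)" for k
  have perk: "F a b (F c k (sc (J k) (X k))) - sc ?s (F c k (sc (J k) (Y k)))
       = relR k + sc (qsgn a b c k) (F c k (sc (J k) (R2 k)))" if k: "k \<in> qI N" for k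
  proof -
    have r: "F a b (F c k (sc (J k) (X k))) = sc (qsgn a b c k) (F c k (F a b (sc (J k) (X k)))) + relR k"
      using rel[OF a b step.prems k, of "sc (J k) (X k)"] unfolding relR_def by (simp add: algebra_simps)
    have i: "F a b (X k) = sc (qsgn a b k d) (Y k) + R2 k"
      using IH[OF k] unfolding X_def Y_def R2_def by (simp add: algebra_simps)
    have "F c k (F a b (sc (J k) (X k))) = sc (qsgn a b k d) (F c k (sc (J k) (Y k))) + F c k (sc (J k) (R2 k))"
      using a b step.prems k i by (simp add: F_scale F_add scale_right_distrib scale_left_commute)
    then have "sc (qsgn a b c k) (F c k (F a b (sc (J k) (X k)))) = sc ?s (F c k (sc (J k) (Y k))) + sc (qsgn a b c k) (F c k (sc (J k) (R2 k)))"
      by (simp add: scale_right_distrib qsgn_mult)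
    then show ?thesis using r by (simp add: algebra_simps)
  qed
  have Cs: "C (Suc n) p q x = (\<Sum>k\<in>qI N. F p k (sc (J k) (C n k q x)))" for p q x
    using C_Suc[OF step.hyps(1)] .
  have lhs: "F a b (C (Suc n) c d w) - sc ?s (C (Suc n) c d (F a b w))
     = (\<Sum>k\<in>qI N. relR k) + (\<Sum>k\<in>qI N. sc (qsgn a b c k) (F c k (sc (J k) (R2 k))))"
  proof -
    have "F a b (C (Suc n) c d w) - sc ?s (C (Suc n) c d (F a b w))
      = (\<Sum>k\<in>qI N. F a b (F c k (sc (J k) (X k))) - sc ?s (F c k (sc (J k) (Y k))))"
      unfolding Cs X_def Y_def using a b by (simp add: F_sum scale_sum_right sum_subtractf)
    also have "\<dots> = (\<Sum>k\<in>qI N. relR k + sc (qsgn a b c k) (F c k (sc (J k) (R2 k))))"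
      by (rule sum.cong) (auto simp: perk)
    finally show ?thesis by (simp add: sum.distrib)
  qed
  have s1: "(\<Sum>k\<in>qI N. relR k) = (if c = b then C (Suc n) a d w else 0)
       - sc (qsgn a b c a) (F c b (sc (J a) (X a)))
       + (if c = - b then C (Suc n) (- a) d w else 0)
       - sc (qsgn a b c (-a)) (F c (-b) (sc (J (-a)) (X (-a))))"
    unfolding relR_def sc_if using a b
    by (simp add: sum.distrib sum_subtractf sum_if_const Cs X_def sum.delta' del: sum.delta)
  have perk2: "sc (qsgn a b c k) (F c k (sc (J k) (R2 k))) =
       (if k = b then sc (qsgn a b c k) (F c k (sc (J k) (C n a d w))) else 0)
     - (if a = d then sc ?s (F c k (sc (J k) (C n k b w))) else 0)
     + (if k = - b then sc (qsgn a b c k) (F c k (sc (J k) (C n (- a) d w))) else 0)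
     - (if - a = d then sc ?s (F c k (sc (J k) (C n k (- b) w))) else 0)" if k: "k \<in> qI N" for k
  proof -
    define G where "G x = sc (qsgn a b c k) (F c k (sc (J k) x))" for x
    have Gadd: "G (x + y) = G x + G y" for x y
      unfolding G_def using k step.prems by (simp add: F_add scale_right_distrib)
    have Gdiff: "G (x - y) = G x - G y" for x y
      unfolding G_def using k step.prems by (simp add: F_diff scale_right_diff_distrib)
    have Gif: "G (if P then x else 0) = (if P then G x else 0)" for P x
      unfolding G_def using k step.prems by (simp add: F_zero)
    have e: "G (sc (qsgn a b k d) x) = sc ?s (F c k (sc (J k) x))" for x
      unfolding G_def using k step.prems by (simp add: F_scale qsgn_mult[of a b c k d, symmetric] mult_ac)
    have "G (R2 k) = (if k = b then G (C n a d w) else 0) - (if a = d then G (sc (qsgn a b k d) (C n k b w)) else 0)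
          + (if k = - b then G (C n (- a) d w) else 0) - (if - a = d then G (sc (qsgn a b k d) (C n k (- b) w)) else 0)"
      unfolding R2_def sc_if Gadd Gdiff Gif ..
    then show ?thesis unfolding e by (simp add: G_def)
  qed
  have s2: "(\<Sum>k\<in>qI N. sc (qsgn a b c k) (F c k (sc (J k) (R2 k)))) =
       sc (qsgn a b c b) (F c b (sc (J b) (C n a d w)))
     - (if a = d then sc ?s (C (Suc n) c b w) else 0)
     + sc (qsgn a b c (-b)) (F c (-b) (sc (J (-b)) (C n (- a) d w)))
     - (if - a = d then sc ?s (C (Suc n) c (- b) w) else 0)"
    using a b
    by (simp add: perk2 sum.distrib sum_subtractf sum_if_const Cs scale_sum_right cong: sum.cong)
  have can1: "sc (qsgn a b c a) (F c b (sc (J a) (X a))) = sc (qsgn a b c b) (F c b (sc (J b) (C n a d w)))"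
    using qsgn_cancel[OF qI_nz[OF a] qI_nz[OF b], of c] a b step.prems unfolding X_def
    by (simp add: F_scale mult.commute)
  have can2: "sc (qsgn a b c (-a)) (F c (-b) (sc (J (-a)) (X (-a)))) = sc (qsgn a b c (-b)) (F c (-b) (sc (J (-b)) (C n (- a) d w)))"
    using qsgn_cancel2[OF qI_nz[OF a] qI_nz[OF b], of c] a b step.prems unfolding X_def
    by (simp add: F_scale mult.commute)
  show ?case unfolding lhs s1 s2 can1 can2
    by (simp add: sc_if algebra_simps)
qed

end


context qrep begin

lemma F_neg: "i\<in>qI N \<Longrightarrow> j\<in>qI N \<Longrightarrow> F i j (- x) = - F i j x"
  using F_hom module_hom.neg by blast

lemma sum_neg_qI: "(\<Sum>k\<in>qI N. f k) = (\<Sum>k\<in>qI N. f (- k))"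
  by (rule sum.reindex_bij_witness[of _ uminus uminus]) auto

lemma J_neg: "k \<noteq> 0 \<Longrightarrow> J (- k) = - J k"
  unfolding qpar_def by auto

lemma C_sym:
  assumes n: "n \<ge> 1" and c: "c\<in>qI N" and d: "d\<in>qI N"
  shows "C n (-c) (-d) w = sc ((-1)^(n-1)) (C n c d w)"
  using n c
proof (induction n arbitrary: c rule: dec_induct)
  case base
  then show ?case using symF[OF base d] by simp
next
  case (step n c)
  have "C (Suc n) (-c) (-d) w = (\<Sum>k\<in>qI N. F (-c) (-k) (sc (J (-k)) (C n (-k) (-d) w)))"
    unfolding C_Suc[OF step.hyps(1)] by (rule sum_neg_qI)
  also have "\<dots> = (\<Sum>k\<in>qI N. sc ((-1)^(Suc n - 1)) (F c k (sc (J k) (C n k d w))))"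
  proof (rule sum.cong)
    fix k assume k: "k \<in> qI N"
    have "F (-c) (-k) (sc (J (-k)) (C n (-k) (-d) w)) = F c k (sc (- J k) (sc ((-1)^(n-1)) (C n k d w)))"
      using symF[OF step.prems k] step.IH[OF k] J_neg[OF qI_nz[OF k]] by simp
    also have "\<dots> = sc ((-1)^(Suc n - 1)) (F c k (sc (J k) (C n k d w)))"
    proof -
      have "(-1::complex)^(Suc n - 1) = - ((-1)^(n-1))" using step.hyps(1) by (cases n) auto
      then show ?thesis using k step.prems by (simp add: F_scale F_neg mult.commute)
    qed
    finally show "F (-c) (-k) (sc (J (-k)) (C n (-k) (-d) w)) = sc ((-1)^(Suc n - 1)) (F c k (sc (J k) (C n k d w)))" .
  qed simp
  also have "\<dots> = sc ((-1)^(Suc n - 1)) (C (Suc n) c d w)"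
    using C_Suc[OF step.hyps(1)] by (simp add: scale_sum_right)
  finally show ?case .
qed

lemma O_sq:
  assumes i: "i \<in> qI N"
  shows "F (-i) i (F (-i) i w) = F i i w"
proof -
  have q: "qsgn (-i) i (-i) i = -1" using qI_nz[OF i] unfolding qsgn_def qpar_def by auto
  have ne: "-i \<noteq> i" using qI_nz[OF i] by auto
  have m1: "sc (-1) x = - x" for x by simp
  have r: "F (-i) i (F (-i) i w) - sc (-1) (F (-i) i (F (-i) i w)) =
           0 - sc (-1) 0 + F i i w - sc (-1) (F i i w)"
    using rel[of "-i" i "-i" i w] i symF[of i i] q ne by simp
  have "F (-i) i (F (-i) i w) + F (-i) i (F (-i) i w) = F i i w + F i i w"
    using r unfolding m1 by simp
  then have "sc 2 (F (-i) i (F (-i) i w)) = sc 2 (F i i w)"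
    using scale_left_distrib[of 1 1] by (metis one_add_one scale_one)
  then show ?thesis by simp
qed

end

locale qhw = qrep +
  fixes v and lam :: "int \<Rightarrow> complex"
  assumes hw: "\<forall>a\<in>qI N. \<forall>b\<in>qI N. \<bar>a\<bar> < \<bar>b\<bar> \<longrightarrow> F a b v = 0"
    and wt: "\<forall>a\<in>{1..int N}. F a a v = sc (lam a) v"
begin

lemma lemA:
  assumes n: "n \<ge> 1" shows "k\<in>qI N \<Longrightarrow> l\<in>qI N \<Longrightarrow> \<bar>k\<bar> < \<bar>l\<bar> \<Longrightarrow> C n k l v = 0"
  using n
proof (induction n arbitrary: k l rule: dec_induct)
  case base
  then show ?case using hw by simp
next
  case (step n k l)
  have "C (Suc n) k l v = (\<Sum>m\<in>qI N. F k m (sc (J m) (C n m l v)))"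
    using C_Suc[OF step.hyps(1)] .
  also have "\<dots> = (\<Sum>m\<in>qI N. 0)"
  proof (rule sum.cong)
    fix m assume m: "m \<in> qI N"
    show "F k m (sc (J m) (C n m l v)) = 0"
    proof (cases "\<bar>m\<bar> < \<bar>l\<bar>")
      case True
      then show ?thesis using step.IH[OF m step.prems(2)] step.prems m by (simp add: F_zero)
    next
      case False
      have "F k m v = 0" using hw step.prems m False by auto
      moreover have "m \<noteq> - m" using qI_nz[OF m] by auto
      ultimately have "F k m (C n m l v) = C n k l v"
        using comm[OF step.hyps(1) step.prems(1) m m step.prems(2), of v] step.prems m
        by (auto simp: C_zero)
      then show ?thesis using step.IH[OF step.prems] step.prems m by (simp add: F_scale)
    qed
  qed simp
  finally show ?case by simp
qed

end


context qrep begin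
lemma split_qI:
  assumes i: "i \<in> {1..int N}" and z: "\<And>k. k \<in> qI N \<Longrightarrow> \<bar>k\<bar> < i \<Longrightarrow> f k = 0"
  shows "(\<Sum>k\<in>qI N. f k) = f i + f (-i) + (\<Sum>j\<in>{i+1..int N}. f j + f (-j))"
proof -
  have "(\<Sum>k\<in>qI N. f k) = (\<Sum>k\<in>{i..int N} \<union> uminus ` {i..int N}. f k)"
  proof (rule sum.mono_neutral_right)
    show "{i..int N} \<union> uminus ` {i..int N} \<subseteq> qI N" using i by (auto simp: qI_def)
    show "\<forall>k\<in>qI N - ({i..int N} \<union> uminus ` {i..int N}). f k = 0"
    proof
      fix k assume k: "k \<in> qI N - ({i..int N} \<union> uminus ` {i..int N})"
      then have "\<bar>k\<bar> < i" unfolding qI_def by (auto simp: image_iff)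
      then show "f k = 0" using z k by auto
    qed
  qed simp
  also have "\<dots> = (\<Sum>k\<in>{i..int N}. f k) + (\<Sum>k\<in>uminus ` {i..int N}. f k)"
    by (rule sum.union_disjoint) (use i in auto)
  also have "(\<Sum>k\<in>uminus ` {i..int N}. f k) = (\<Sum>k\<in>{i..int N}. f (-k))"
    by (subst sum.reindex) (auto simp: inj_on_def)
  also have "{i..int N} = insert i {i+1..int N}" using i by auto
  finally show ?thesis by (simp add: sum.distrib algebra_simps)
qed
end

context qhw begin

lemma qI_pos: "i \<in> {1..int N} \<Longrightarrow> i \<in> qI N" unfolding qI_def by auto
lemma qI_neg': "i \<in> {1..int N} \<Longrightarrow> -i \<in> qI N" unfolding qI_def by auto

lemma Fv: "i \<in> {1..int N} \<Longrightarrow> F i i v = sc (lam i) v" using wt by auto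

lemma t1: assumes n: "n\<ge>1" and i: "i \<in> {1..int N}"
  shows "F i i (C n i i v) = sc (lam i) (C n i i v)"
proof -
  have q: "qsgn i i i i = 1" unfolding qsgn_def by simp
  have "i \<noteq> - i" using i by auto
  then show ?thesis using comm[OF n qI_pos[OF i] qI_pos[OF i] qI_pos[OF i] qI_pos[OF i], of v] q
    Fv[OF i] qI_pos[OF i] by (simp add: C_scale)
qed

lemma t2: assumes n: "n\<ge>1" and i: "i \<in> {1..int N}"
  shows "F i i (C n (-i) i v) = sc (lam i) (C n (-i) i v)"
proof -
  have q: "qsgn i i (-i) i = 1" unfolding qsgn_def by simp
  have "i \<noteq> - i" using i by auto
  then show ?thesis using comm[OF n qI_pos[OF i] qI_pos[OF i] qI_neg'[OF i] qI_pos[OF i], of v] q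
    Fv[OF i] qI_pos[OF i] by (simp add: C_scale)
qed

lemma t3: assumes n: "n\<ge>1" and i: "i \<in> {1..int N}" and j: "j \<in> {i+1..int N}"
  shows "F i j (C n j i v) = C n i i v - C n j j v"
proof -
  have j': "j \<in> {1..int N}" using i j by auto
  have q: "qsgn i j j i = 1" using i j unfolding qsgn_def qpar_def by simp
  have "F i j v = 0" using hw qI_pos[OF i] qI_pos[OF j'] i j by auto
  then show ?thesis using comm[OF n qI_pos[OF i] qI_pos[OF j'] qI_pos[OF j'] qI_pos[OF i], of v] q
    i j by (simp add: C_zero qI_pos[OF i] qI_pos[OF j'])
qed

lemma t4: assumes n: "n\<ge>1" and i: "i \<in> {1..int N}" and j: "j \<in> {i+1..int N}"
  shows "F i (-j) (C n (-j) i v) = C n i i v + C n (-j) (-j) v"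
proof -
  have j': "j \<in> {1..int N}" using i j by auto
  have q: "qsgn i (-j) (-j) i = -1" using i j unfolding qsgn_def qpar_def by simp
  have "F i (-j) v = 0" using hw qI_pos[OF i] qI_neg'[OF j'] i j by auto
  then show ?thesis using comm[OF n qI_pos[OF i] qI_neg'[OF j'] qI_neg'[OF j'] qI_pos[OF i], of v] q
    i j by (simp add: C_zero[OF qI_neg'[OF j'] qI_pos[OF i]])
qed

lemma t5: assumes n: "n\<ge>1" and i: "i \<in> {1..int N}" and j: "j \<in> {i+1..int N}"
  shows "F (-i) j (C n j i v) = C n (-i) i v - C n j (-j) v"
proof -
  have j': "j \<in> {1..int N}" using i j by auto
  have q: "qsgn (-i) j j i = 1" using i j unfolding qsgn_def qpar_def by simp
  have "F (-i) j v = 0" using hw qI_neg'[OF i] qI_pos[OF j'] i j by auto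
  then show ?thesis using comm[OF n qI_neg'[OF i] qI_pos[OF j'] qI_pos[OF j'] qI_pos[OF i], of v] q
    i j by (simp add: C_zero qI_pos[OF i] qI_pos[OF j'])
qed

lemma t6: assumes n: "n\<ge>1" and i: "i \<in> {1..int N}" and j: "j \<in> {i+1..int N}"
  shows "F (-i) (-j) (C n (-j) i v) = C n (-i) i v - C n (-j) j v"
proof -
  have j': "j \<in> {1..int N}" using i j by auto
  have q: "qsgn (-i) (-j) (-j) i = 1" using i j unfolding qsgn_def qpar_def by simp
  have "F (-i) (-j) v = 0" using hw qI_neg'[OF i] qI_neg'[OF j'] i j by auto
  then show ?thesis using comm[OF n qI_neg'[OF i] qI_neg'[OF j'] qI_neg'[OF j'] qI_pos[OF i], of v] q
    i j by (simp add: C_zero[OF qI_neg'[OF j'] qI_pos[OF i]])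
qed

end


primrec alpha :: "nat \<Rightarrow> (int \<Rightarrow> complex) \<Rightarrow> nat \<Rightarrow> int \<Rightarrow> complex" where
  "alpha N lam 0 = lam"
| "alpha N lam (Suc m) = (\<lambda>j. lam j * (lam j - 1) * alpha N lam m j
      - 2 * lam j * (\<Sum>l\<in>{j+1..int N}. alpha N lam m l))"

context qhw begin

lemma Jpos: "i \<in> {1..int N} \<Longrightarrow> J i = 1" unfolding qpar_def by auto
lemma Jneg: "i \<in> {1..int N} \<Longrightarrow> J (-i) = -1" unfolding qpar_def by auto

lemma recA: assumes n: "n\<ge>1" and i: "i \<in> {1..int N}"
  shows "C (Suc n) i i v = sc (lam i) (C n i i v) - F (-i) i (C n (-i) i v)
     - (\<Sum>j\<in>{i+1..int N}. C n j j v + C n (-j) (-j) v)"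
proof -
  have ip: "i \<in> qI N" and im: "-i \<in> qI N" using qI_pos[OF i] qI_neg'[OF i] .
  have "C (Suc n) i i v = (\<Sum>k\<in>qI N. F i k (sc (J k) (C n k i v)))" using C_Suc[OF n] .
  also have "\<dots> = F i i (sc (J i) (C n i i v)) + F i (-i) (sc (J (-i)) (C n (-i) i v))
     + (\<Sum>j\<in>{i+1..int N}. F i j (sc (J j) (C n j i v)) + F i (-j) (sc (J (-j)) (C n (-j) i v)))"
  proof (rule split_qI[OF i])
    fix k assume k: "k \<in> qI N" "\<bar>k\<bar> < i"
    then have "C n k i v = 0" using lemA[OF n k(1) ip] i by auto
    then show "F i k (sc (J k) (C n k i v)) = 0" using k ip by (simp add: F_zero)
  qed
  also have "\<dots> = sc (lam i) (C n i i v) - F (-i) i (C n (-i) i v)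
     + (\<Sum>j\<in>{i+1..int N}. - (C n j j v + C n (-j) (-j) v))"
  proof -
    have a: "F i i (sc (J i) (C n i i v)) = sc (lam i) (C n i i v)" using t1[OF n i] Jpos[OF i] by simp
    have b: "F i (-i) (sc (J (-i)) (C n (-i) i v)) = - F (-i) i (C n (-i) i v)"
      using symF[OF im ip] Jneg[OF i] ip im by (simp add: F_neg)
    have c: "(\<Sum>j\<in>{i+1..int N}. F i j (sc (J j) (C n j i v)) + F i (-j) (sc (J (-j)) (C n (-j) i v)))
         = (\<Sum>j\<in>{i+1..int N}. - (C n j j v + C n (-j) (-j) v))"
    proof (rule sum.cong)
      fix j assume j: "j \<in> {i+1..int N}"
      have j': "j \<in> {1..int N}" using i j by auto
      show "F i j (sc (J j) (C n j i v)) + F i (-j) (sc (J (-j)) (C n (-j) i v)) = - (C n j j v + C n (-j) (-j) v)"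
        using t3[OF n i j] t4[OF n i j] Jpos[OF j'] Jneg[OF j'] ip qI_pos[OF j'] qI_neg'[OF j']
        by (simp add: F_neg)
    qed simp
    show ?thesis using a b c by simp
  qed
  also have "(\<Sum>j\<in>{i+1..int N}. - (C n j j v + C n (-j) (-j) v)) = - (\<Sum>j\<in>{i+1..int N}. C n j j v + C n (-j) (-j) v)"
    by (rule sum_negf)
  finally show ?thesis by simp
qed

lemma recB: assumes n: "n\<ge>1" and i: "i \<in> {1..int N}"
  shows "C (Suc n) (-i) i v = F (-i) i (C n i i v) - sc (lam i) (C n (-i) i v)
     + (\<Sum>j\<in>{i+1..int N}. C n (-j) j v - C n j (-j) v)"
proof -
  have ip: "i \<in> qI N" and im: "-i \<in> qI N" using qI_pos[OF i] qI_neg'[OF i] .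
  have "C (Suc n) (-i) i v = (\<Sum>k\<in>qI N. F (-i) k (sc (J k) (C n k i v)))" using C_Suc[OF n] .
  also have "\<dots> = F (-i) i (sc (J i) (C n i i v)) + F (-i) (-i) (sc (J (-i)) (C n (-i) i v))
     + (\<Sum>j\<in>{i+1..int N}. F (-i) j (sc (J j) (C n j i v)) + F (-i) (-j) (sc (J (-j)) (C n (-j) i v)))"
  proof (rule split_qI[OF i])
    fix k assume k: "k \<in> qI N" "\<bar>k\<bar> < i"
    then have "C n k i v = 0" using lemA[OF n k(1) ip] i by auto
    then show "F (-i) k (sc (J k) (C n k i v)) = 0" using k im by (simp add: F_zero)
  qed
  also have "\<dots> = F (-i) i (C n i i v) - sc (lam i) (C n (-i) i v)
     + (\<Sum>j\<in>{i+1..int N}. C n (-j) j v - C n j (-j) v)"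
  proof -
    have a: "F (-i) i (sc (J i) (C n i i v)) = F (-i) i (C n i i v)" using Jpos[OF i] by simp
    have b: "F (-i) (-i) (sc (J (-i)) (C n (-i) i v)) = - sc (lam i) (C n (-i) i v)"
      using symF[OF ip ip] Jneg[OF i] ip im t2[OF n i] by (simp add: F_neg)
    have c: "(\<Sum>j\<in>{i+1..int N}. F (-i) j (sc (J j) (C n j i v)) + F (-i) (-j) (sc (J (-j)) (C n (-j) i v)))
         = (\<Sum>j\<in>{i+1..int N}. C n (-j) j v - C n j (-j) v)"
    proof (rule sum.cong)
      fix j assume j: "j \<in> {i+1..int N}"
      have j': "j \<in> {1..int N}" using i j by auto
      show "F (-i) j (sc (J j) (C n j i v)) + F (-i) (-j) (sc (J (-j)) (C n (-j) i v)) = C n (-j) j v - C n j (-j) v"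
        using t5[OF n i j] t6[OF n i j] Jpos[OF j'] Jneg[OF j'] im qI_pos[OF j'] qI_neg'[OF j']
        by (simp add: F_neg)
    qed simp
    show ?thesis using a b c by simp
  qed
  finally show ?thesis .
qed

end


context qhw begin

lemma step2: assumes i: "i \<in> {1..int N}"
  shows "C (2*m+3) i i v = sc (lam i * (lam i - 1)) (C (2*m+1) i i v)
     - sc (2 * lam i) (\<Sum>j\<in>{i+1..int N}. C (2*m+1) j j v)"
proof -
  define n where "n = 2*m+1"
  have n: "n \<ge> 1" "Suc n \<ge> 1" unfolding n_def by auto
  have ip: "i \<in> qI N" and im: "-i \<in> qI N" using qI_pos[OF i] qI_neg'[OF i] .
  have jj: "j \<in> {i+1..int N} \<Longrightarrow> j \<in> qI N \<and> -j \<in> qI N" for j using i unfolding qI_def by auto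
  have e1: "(-1::complex)^(n-1) = 1" unfolding n_def by simp
  have e2: "(-1::complex)^(Suc n-1) = -1" unfolding n_def by simp
  define A where "A = C n i i v"
  define B where "B = C n (-i) i v"
  define S where "S = (\<Sum>j\<in>{i+1..int N}. C n j j v)"
  have A1: "C (Suc n) i i v = sc (lam i) A - F (-i) i B - (S + S)"
  proof -
    have "(\<Sum>j\<in>{i+1..int N}. C n j j v + C n (-j) (-j) v) = (\<Sum>j\<in>{i+1..int N}. C n j j v + C n j j v)"
    proof (rule sum.cong)
      fix j assume j: "j \<in> {i+1..int N}"
      show "C n j j v + C n (-j) (-j) v = C n j j v + C n j j v"
        using C_sym[OF n(1), of j j v] jj[OF j] e1 by simp
    qed simp
    then show ?thesis using recA[OF n(1) i] unfolding A_def B_def S_def by (simp add: sum.distrib)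
  qed
  have B1: "C (Suc n) (-i) i v = F (-i) i A - sc (lam i) B"
  proof -
    have "(\<Sum>j\<in>{i+1..int N}. C n (-j) j v - C n j (-j) v) = (\<Sum>j\<in>{i+1..int N}. 0)"
    proof (rule sum.cong)
      fix j assume j: "j \<in> {i+1..int N}"
      show "C n (-j) j v - C n j (-j) v = 0"
        using C_sym[OF n(1), of j "-j" v] jj[OF j] e1 by simp
    qed simp
    then show ?thesis using recB[OF n(1) i] unfolding A_def B_def by simp
  qed
  have A2: "C (Suc (Suc n)) i i v = sc (lam i) (C (Suc n) i i v) - F (-i) i (C (Suc n) (-i) i v)"
  proof -
    have "(\<Sum>j\<in>{i+1..int N}. C (Suc n) j j v + C (Suc n) (-j) (-j) v) = (\<Sum>j\<in>{i+1..int N}. 0)"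
    proof (rule sum.cong)
      fix j assume j: "j \<in> {i+1..int N}"
      show "C (Suc n) j j v + C (Suc n) (-j) (-j) v = 0"
        using C_sym[OF n(2), of j j v] jj[OF j] e2 by simp
    qed simp
    then show ?thesis using recA[OF n(2) i] by simp
  qed
  have OB: "F (-i) i (C (Suc n) (-i) i v) = sc (lam i) A - sc (lam i) (F (-i) i B)"
    unfolding B1 using O_sq[OF ip] t1[OF n(1) i] ip im unfolding A_def
    by (simp add: F_diff F_scale)
  have X: "C (Suc (Suc n)) i i v = sc (lam i * lam i - lam i) A - sc (lam i) (S + S)"
    unfolding A2 A1 OB
    by (simp add: F_diff F_scale ip im scale_right_diff_distrib scale_left_diff_distrib algebra_simps del: qC.simps)
  have e: "2*m+3 = Suc (Suc n)" unfolding n_def by simp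
  have e3: "sc (lam i) (S + S) = sc (2 * lam i) S"
    by (metis mult_2 scale_left_distrib scale_right_distrib mult.commute scale_scale)
  have e4: "lam i * lam i - lam i = lam i * (lam i - 1)" by (simp add: algebra_simps)
  have "C (2*m+3) i i v = C (Suc (Suc n)) i i v" by (simp only: e)
  also have "\<dots> = sc (lam i * (lam i - 1)) A - sc (2 * lam i) S" unfolding X e3 e4 ..
  finally show ?thesis unfolding A_def S_def n_def .
qed

lemma scal: "j \<in> {1..int N} \<Longrightarrow> C (2*m+1) j j v = sc (alpha N lam m j) v"
proof (induction m arbitrary: j)
  case 0
  then show ?case using Fv by simp
next
  case (Suc m)
  have e: "2*Suc m+1 = 2*m+3" by simp
  have "C (2*Suc m+1) j j v = C (2*m+3) j j v" by (simp only: e)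
  also have "\<dots> = sc (lam j * (lam j - 1)) (sc (alpha N lam m j) v)
     - sc (2 * lam j) (\<Sum>l\<in>{j+1..int N}. sc (alpha N lam m l) v)"
  proof -
    have "(\<Sum>l\<in>{j+1..int N}. C (2*m+1) l l v) = (\<Sum>l\<in>{j+1..int N}. sc (alpha N lam m l) v)"
      by (rule sum.cong) (use Suc in auto)
    then show ?thesis using step2[OF Suc.prems, of m] Suc.IH[OF Suc.prems] by simp
  qed
  also have "\<dots> = sc (alpha N lam (Suc m) j) v"
    by (simp add: scale_sum_left[symmetric] scale_left_diff_distrib)
  finally show ?case .
qed

end

notation fls_nth (infixl \<open>$$\<close> 75)

definition GG :: "nat \<Rightarrow> (int \<Rightarrow> complex) \<Rightarrow> int \<Rightarrow> complex fls" where
  "GG N lam j = fps_to_fls (Abs_fps (\<lambda>n. if odd n then alpha N lam (n div 2) j else 0))"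

lemma fls_const_add': "fls_const (a + b) = fls_const a + (fls_const b :: 'a::monoid_add fls)"
  by (intro fls_eqI) simp

lemma GG_nth: "GG N lam j $$ n = (if n < 0 then 0 else if odd (nat n) then alpha N lam (nat n div 2) j else 0)"
  unfolding GG_def by simp

lemma L1: "GG N lam j * (fls_X_inv ^ 2 - fls_const (lam j * (lam j - 1)))
   = fls_const (lam j) * fls_X_inv - fls_const (2 * lam j) * (\<Sum>l\<in>{j+1..int N}. GG N lam l)"
proof (rule fls_eqI)
  fix n :: int
  have sh: "(GG N lam j * fls_X_inv ^ 2) $$ n = GG N lam j $$ (n + 2)"
    using fls_X_inv_power_times_conv_shift(2)[of "GG N lam j" 2] by simp
  have "(GG N lam j * (fls_X_inv ^ 2 - fls_const (lam j * (lam j - 1)))) $$ n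
      = GG N lam j $$ (n + 2) - GG N lam j $$ n * (lam j * (lam j - 1))"
    using sh by (simp add: algebra_simps)
  also have "\<dots> = (fls_const (lam j) * fls_X_inv - fls_const (2 * lam j) * (\<Sum>l\<in>{j+1..int N}. GG N lam l)) $$ n"
  proof -
    have r: "(fls_const (lam j) * fls_X_inv - fls_const (2 * lam j) * (\<Sum>l\<in>{j+1..int N}. GG N lam l)) $$ n
       = (if n = -1 then lam j else 0) - 2 * lam j * (\<Sum>l\<in>{j+1..int N}. GG N lam l $$ n)"
      by (simp add: fls_nth_sum)
    have "GG N lam j $$ (n + 2) - GG N lam j $$ n * (lam j * (lam j - 1)) =
      (if n = -1 then lam j else 0) - 2 * lam j * (\<Sum>l\<in>{j+1..int N}. GG N lam l $$ n)"
    proof (cases "n < -2")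
      case True then show ?thesis unfolding GG_nth by simp
    next
      case False
      then consider "n = -2" | "n = -1" | "n \<ge> 0" by linarith
      then show ?thesis
      proof cases
        case 1 then show ?thesis unfolding GG_nth by simp
      next
        case 2 then show ?thesis unfolding GG_nth by simp
      next
        case 3
        define k where "k = nat n"
        have nk: "n = int k" using 3 k_def by simp
        have e: "nat (int k + 2) = Suc (Suc k)" by simp
        show ?thesis
        proof (cases "odd k")
          case True
          have d: "Suc (Suc k) div 2 = Suc (k div 2)" using True by simp
          show ?thesis unfolding GG_nth nk e using True
            by (simp add: d sum_distrib_left algebra_simps)
        next
          case False
          then show ?thesis unfolding GG_nth nk e by simp
        qed
      qed
    qed
    then show ?thesis using r by simp
  qed
  finally show "(GG N lam j * (fls_X_inv ^ 2 - fls_const (lam j * (lam j - 1)))) $$ n =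
    (fls_const (lam j) * fls_X_inv - fls_const (2 * lam j) * (\<Sum>l\<in>{j+1..int N}. GG N lam l)) $$ n" .
qed


lemma D_nz: "fls_X_inv ^ 2 - fls_const c \<noteq> (0::complex fls)"
proof
  assume "fls_X_inv ^ 2 - fls_const c = (0::complex fls)"
  then have "(fls_X_inv ^ 2 - fls_const c) $$ (-2) = (0::complex fls) $$ (-2)" by simp
  then show False by simp
qed

lemma alg:
  fixes G Dc Dd l X S P :: "'a::field"
  assumes "Dc \<noteq> 0" "G * Dc = l * X - (2 * l) * S" "2 * S = X * (1 - P)" "Dd = Dc - 2 * l"
  shows "2 * (G + S) = X * (1 - Dd * inverse Dc * P)" and "G = l * X * inverse Dc * P"
proof -
  have "G * Dc = l * X * P" using assms(2,3)
    by (metis (no_types, lifting) mult.assoc mult.left_commute right_diff_distrib mult_1_right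
        diff_diff_eq2 diff_self diff_zero)
  then have g: "G = l * X * P / Dc" using assms(1) by (simp add: field_simps)
  show g2: "G = l * X * inverse Dc * P" using g by (simp add: field_simps)
  have e1: "X * (1 - Dd * inverse Dc * P) = X - X * P + 2 * (l * X * inverse Dc * P)"
    using assms(1) unfolding assms(4) by (simp add: field_simps)
  have e2: "2 * S = X - X * P" using assms(3) by (simp add: algebra_simps)
  show "2 * (G + S) = X * (1 - Dd * inverse Dc * P)"
    unfolding e1 distrib_left e2 g2 by simp
qed

definition PP :: "nat \<Rightarrow> (int \<Rightarrow> complex) \<Rightarrow> int \<Rightarrow> complex fls" where
  "PP N lam i = (\<Prod>j\<in>{i+1..int N}. (fls_X_inv ^ 2 - fls_const (lam j * (lam j + 1)))
                   * inverse (fls_X_inv ^ 2 - fls_const (lam j * (lam j - 1))))"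
definition SS :: "nat \<Rightarrow> (int \<Rightarrow> complex) \<Rightarrow> int \<Rightarrow> complex fls" where
  "SS N lam i = (\<Sum>j\<in>{i+1..int N}. GG N lam j)"

lemma L1': "GG N lam j * (fls_X_inv ^ 2 - fls_const (lam j * (lam j - 1)))
   = fls_const (lam j) * fls_X_inv - (2 * fls_const (lam j)) * SS N lam j"
  using L1[of N lam j] unfolding SS_def
  by (metis fls_const_mult_const fls_const_numeral)

lemma Dd: "fls_X_inv ^ 2 - fls_const (l * (l + 1)) = (fls_X_inv ^ 2 - fls_const (l * (l - 1))) - 2 * fls_const (l::complex)"
proof -
  have "l * (l + 1) = l * (l - 1) + 2 * l" by (simp add: algebra_simps)
  then have "fls_const (l * (l + 1)) = fls_const (l * (l - 1)) + 2 * fls_const l"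
    by (metis fls_const_add' fls_const_mult_const fls_const_numeral)
  then show ?thesis by (simp add: algebra_simps)
qed

lemma H: "i = int N - int k \<Longrightarrow> 0 \<le> i \<Longrightarrow> 2 * SS N lam i = fls_X_inv * (1 - PP N lam i)"
proof (induction k arbitrary: i)
  case 0
  then show ?case by (simp add: SS_def PP_def)
next
  case (Suc k)
  have IH: "2 * SS N lam (i+1) = fls_X_inv * (1 - PP N lam (i+1))" using Suc by simp
  have le: "i + 1 \<le> int N" using Suc.prems by simp
  have S: "SS N lam i = GG N lam (i+1) + SS N lam (i+1)"
  proof -
    have "{i+1..int N} = insert (i+1) {i+1+1..int N}" using le by auto
    then show ?thesis unfolding SS_def by simp
  qed
  have P: "PP N lam i = (fls_X_inv ^ 2 - fls_const (lam (i+1) * (lam (i+1) + 1)))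
                   * inverse (fls_X_inv ^ 2 - fls_const (lam (i+1) * (lam (i+1) - 1))) * PP N lam (i+1)"
  proof -
    have "{i+1..int N} = insert (i+1) {i+1+1..int N}" using le by auto
    then show ?thesis unfolding PP_def by simp
  qed
  show ?case unfolding S P
    by (rule alg(1)[OF D_nz L1' IH Dd])
qed

lemma GG_formula: "0 \<le> i \<Longrightarrow> i \<le> int N \<Longrightarrow>
  GG N lam i = fls_const (lam i) * fls_X_inv * inverse (fls_X_inv ^ 2 - fls_const (lam i * (lam i - 1))) * PP N lam i"
  using alg(2)[OF D_nz L1' H[of i N "nat (int N - i)"] Dd] by simp


theorem mainTheorem11:
  fixes N :: nat
    and sc :: "complex \<Rightarrow> 'v::ab_group_add \<Rightarrow> 'v"
    and F :: "int \<Rightarrow> int \<Rightarrow> 'v \<Rightarrow> 'v"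
    and v :: 'v
    and lam :: "int \<Rightarrow> complex"
    and i :: int
  assumes rep: "qN_rep N sc F"
    and hw: "\<forall>a\<in>qI N. \<forall>b\<in>qI N. \<bar>a\<bar> < \<bar>b\<bar> \<longrightarrow> F a b v = 0"
    and wt: "\<forall>a\<in>{1..int N}. F a a v = sc (lam a) v"
    and v_nz: "v \<noteq> 0"
    and i: "i \<in> {1..int N}"
  shows "(\<forall>m::nat. \<exists>c. qC N sc F (2*m+1) i i v = sc c v) \<and>
         (\<forall>a::nat \<Rightarrow> complex. (\<forall>m. qC N sc F (2*m+1) i i v = sc (a m) v) \<longrightarrow>
            fps_to_fls (Abs_fps (\<lambda>n. if odd n then a (n div 2) else 0)) =
              fls_const (lam i) * fls_X_inv
              * inverse (fls_X_inv ^ 2 - fls_const (lam i * (lam i - 1)))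
              * (\<Prod>j\<in>{i+1..int N}.
                   (fls_X_inv ^ 2 - fls_const (lam j * (lam j + 1)))
                   * inverse (fls_X_inv ^ 2 - fls_const (lam j * (lam j - 1)))))"
  proof -
  have R: "vector_space sc" "qrep_axioms sc N F"
    using rep unfolding qN_rep_def qrep_axioms_def by blast+
  have Q: "qrep sc N F" using R by (rule qrep.intro)
  interpret qhw sc N F v lam
    by (rule qhw.intro[OF Q]) (unfold qhw_axioms_def, use hw wt in blast)
  have scal': "qC N sc F (2*m+1) i i v = sc (alpha N lam m i) v" for m using scal[OF i] .
  show ?thesis
  proof (intro conjI allI impI)
    fix m show "\<exists>c. qC N sc F (2*m+1) i i v = sc c v" using scal' by blast
  next
    fix a :: "nat \<Rightarrow> complex"
    assume a: "\<forall>m. qC N sc F (2*m+1) i i v = sc (a m) v"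
    have "a m = alpha N lam m i" for m using a scal'[of m] v_nz by simp
    then have "(\<lambda>n. if odd n then a (n div 2) else 0) = (\<lambda>n. if odd n then alpha N lam (n div 2) i else 0)"
      by auto
    then have "fps_to_fls (Abs_fps (\<lambda>n. if odd n then a (n div 2) else 0)) = GG N lam i"
      unfolding GG_def by simp
    also have "\<dots> = fls_const (lam i) * fls_X_inv * inverse (fls_X_inv ^ 2 - fls_const (lam i * (lam i - 1))) * PP N lam i"
      using i by (intro GG_formula) auto
    finally show "fps_to_fls (Abs_fps (\<lambda>n. if odd n then a (n div 2) else 0)) =
              fls_const (lam i) * fls_X_inv
              * inverse (fls_X_inv ^ 2 - fls_const (lam i * (lam i - 1)))
              * (\<Prod>j\<in>{i+1..int N}.
                   (fls_X_inv ^ 2 - fls_const (lam j * (lam j + 1)))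
                   * inverse (fls_X_inv ^ 2 - fls_const (lam j * (lam j - 1))))"
      unfolding PP_def .
  qed
qed

end
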